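(* Let $B=2^{k_1}C_1\perp\cdots\perp2^{k_r}C_r\in\mathcal H_n(\mathfrak o)$ be a pre-optimal form, $B_1=2^{k_1}C_1\perp\cdots\perp2^{k_{r-1}}C_{r-1}$, $n_1=\deg B_1$, $n_2=\deg C_r$. (1) Let $n_2=1$. (1.1) If $n_1$ is even, then $\Delta(B)-\Delta(B_1)=k_r+2$ if $\mathrm{ord}(\det B_1)$ is odd; $=k_r+1$ if $\mathrm{ord}(\det B_1)$ is even and $\xi_{B_1}=0$; $=k_r$ if $\xi_{B_1}\ne0$. (1.2) If $n_1$ is odd, then $\Delta(B)-\Delta(B_1)=k_r$ if $\mathrm{ord}(\det B)$ is odd; $=k_r+1$ if $\mathrm{ord}(\det B)$ is even and $\xi_B=0$; $=k_r+2$ if $\xi_B\ne0$. (2) If $n_2=2$ and $C_r$ is unimodular diagonal, then $\Delta(B)=\Delta(B_1)+2k_r+2$. (3) If $C_r\in\frac12(S_2(\mathfrak o)_e\cap GL_2(\mathfrak o))$, then $\Delta(B)=\Delta(B_1)+2k_r$.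
   Context: Let $F$ be a finite unramified extension of $\mathbb Q_2$ with ring of integers $\mathfrak o$, $\mathrm{ord}$ the valuation with $\mathrm{ord}(2)=1$, $\mathrm{ord}(0)=+\infty$. $\mathcal H_n(\mathfrak o)$ is the set of symmetric $B=(b_{ij})\in M_n(F)$ with $b_{ii}\in\mathfrak o$, $2b_{ij}\in\mathfrak o$. $\perp$ is block-diagonal sum. For nondegenerate $B$ of degree $n$: $D_B=(-4)^{[n/2]}\det B$; $\xi_B=1,-1,0$ according as $D_B\in F^{\times2}$, $F(\sqrt{D_B})/F$ unramified quadratic, or ramified; $\mathfrak D_B$ is the discriminant ideal of $F(\sqrt{D_B})/F$ (the unit ideal if $D_B$ is a square); $\Delta(B)=\mathrm{ord}(D_B)$ if $n$ is odd and $\Delta(B)=\mathrm{ord}(D_B)-\mathrm{ord}(\mathfrak D_B)+1-\xi_B^2$ if $n$ is even. For the empty matrix, $\det=1$, $\xi=1$, $\Delta=0$. $S_2(\mathfrak o)_e$: symmetric $2\times2$ matrices over $\mathfrak o$ with diagonal in $2\mathfrak o$; unimodular diagonal: diagonal with unit entries. Pre-optimal forms: $B=2^{k_1}C_1\perp\cdots\perp2^{k_r}C_r$ with $k_i\ge0$, each $C_i$ unimodular diagonal or in $\frac12(S_2(\mathfrak o)_e\cap GL_2(\mathfrak o))$; $B^{[j]}=2^{k_1}C_1\perp\cdots\perp2^{k_j}C_j$; $\mathcal D_m=\{j:k_j=m,C_j\text{ diagonal}\}$, $\mathcal E_m=\{j:k_j=m,C_j\text{ not diagonal}\}$. Pre-optimal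 means: (PO1) $\sum_{j\in\mathcal D_m}\deg C_j\le2$ and $\mathcal E_m$ is a (possibly empty) set of consecutive integers, for each $m$; (PO2) for $i<j$: $i\in\mathcal D_{m_1},j\in\mathcal D_{m_2}\Rightarrow m_1\le m_2$; $i\in\mathcal E_{m_1},j\in\mathcal E_{m_2}\Rightarrow m_1\le m_2$; $i\in\mathcal D_{m_1},j\in\mathcal E_{m_2}\Rightarrow m_1\le m_2-1$; $i\in\mathcal E_{m_1},j\in\mathcal D_{m_2}\Rightarrow m_1\le m_2+1$; (PO3) if $C_i$ is unimodular diagonal of degree 2 then $i\ge2$ and either ($\deg B^{[i]}$ even and $\xi_{B^{[i-1]}}=\xi_{B^{[i]}}=0$) or ($\deg B^{[i-1]}$ odd and $\mathrm{ord}\det B^{[i-1]}+k_i$ even); (PO4) if $k_i=k_{i-1}-1$, $C_i$ diagonal, $C_{i-1}$ not diagonal, then $\deg C_i=2$, or $\deg C_i=1$ and either ($\deg B^{[i]}$ and $\mathrm{ord}\det B^{[i]}$ even) or ($\deg B^{[i]}$ odd and $\xi_{B^{[i-1]}}=0$); (PO5) if $C_i$ diagonal, $C_{i+1}$ not diagonal, $k_i=k_{i+1}-1$, then $\deg C_i=1$ and either ($\deg B^{[i]}$ even and $\mathrm{ord}\det B^{[i]}$ odd) or ($\deg B^{[i]}$ odd and $\xi_{B^{[i-1]}}\ne0$ if $i\ge2$); (PO6) if $\deg B^{[i]}$ even, $C_i,C_{i+1}$ unimodular diagonal, $k_{i+1}=k_i+1$, then $\xi_{B^{[i]}}=0$.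 *)

theory Defs
  imports Main "Jordan_Normal_Form.Determinant"
begin

text \<open>F is modelled as a field of characteristic 0 (type class field_char_0) together
with a function ord : F \<Rightarrow> int (the value at 0 is irrelevant; ord 0 = +infinity is
encoded by always treating 0 separately). The predicate unram_ext_Q2 says: ord is a
discrete valuation, ord 2 = 1 (absolute ramification index 1), the residue field is
finite and F is complete. These are exactly the finite unramified extensions of Q_2.\<close>

definition integral :: "('a::field \<Rightarrow> int) \<Rightarrow> 'a \<Rightarrow> bool" where
  "integral ord x \<longleftrightarrow> x = 0 \<or> ord x \<ge> 0"

definition is_unit :: "('a::field \<Rightarrow> int) \<Rightarrow> 'a \<Rightarrow> bool" where
  "is_unit ord x \<longleftrightarrow> x \<noteq> 0 \<and> ord x = 0"

definition in_2o :: "('a::field \<Rightarrow> int) \<Rightarrow> 'a \<Rightarrow> bool" where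
  "in_2o ord x \<longleftrightarrow> x = 0 \<or> ord x \<ge> 1"

definition close :: "('a::field \<Rightarrow> int) \<Rightarrow> int \<Rightarrow> 'a \<Rightarrow> 'a \<Rightarrow> bool" where
  "close ord M x y \<longleftrightarrow> x = y \<or> ord (x - y) \<ge> M"

definition unram_ext_Q2 :: "('a::field_char_0 \<Rightarrow> int) \<Rightarrow> bool" where
  "unram_ext_Q2 ord \<longleftrightarrow>
     (\<forall>x y. x \<noteq> 0 \<longrightarrow> y \<noteq> 0 \<longrightarrow> ord (x * y) = ord x + ord y)
   \<and> (\<forall>x y. x \<noteq> 0 \<longrightarrow> y \<noteq> 0 \<longrightarrow> x + y \<noteq> 0 \<longrightarrow> ord (x + y) \<ge> min (ord x) (ord y))
   \<and> ord 2 = 1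
   \<and> (\<exists>S. finite S \<and> (\<forall>x. integral ord x \<longrightarrow> (\<exists>s\<in>S. in_2o ord (x - s))))
   \<and> (\<forall>s :: nat \<Rightarrow> 'a. (\<forall>M. \<exists>N. \<forall>m\<ge>N. \<forall>n\<ge>N. close ord M (s m) (s n))
          \<longrightarrow> (\<exists>L. \<forall>M. \<exists>N. \<forall>n\<ge>N. close ord M (s n) L))"

text \<open>Elements of F(sqrt D) (D a non-square) are pairs (a,b) standing for a + b sqrt D.\<close>

definition qmult :: "'a::field \<Rightarrow> 'a \<times> 'a \<Rightarrow> 'a \<times> 'a \<Rightarrow> 'a \<times> 'a" where
  "qmult D x y = (fst x * fst y + D * snd x * snd y, fst x * snd y + snd x * fst y)"

definition qtrace :: "'a::field \<Rightarrow> 'a \<times> 'a \<Rightarrow> 'a" where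
  "qtrace D x = 2 * fst x"

definition qnorm :: "'a::field \<Rightarrow> 'a \<times> 'a \<Rightarrow> 'a" where
  "qnorm D x = fst x ^ 2 - D * snd x ^ 2"

text \<open>x is integral over o iff its characteristic polynomial t^2 - Tr(x) t + N(x) has
coefficients in o.\<close>
definition qintegral :: "('a::field \<Rightarrow> int) \<Rightarrow> 'a \<Rightarrow> 'a \<times> 'a \<Rightarrow> bool" where
  "qintegral ord D x \<longleftrightarrow> integral ord (qtrace D x) \<and> integral ord (qnorm D x)"

definition qdisc :: "'a::field \<Rightarrow> 'a \<times> 'a \<Rightarrow> 'a \<times> 'a \<Rightarrow> 'a" where
  "qdisc D x y = qtrace D (qmult D x x) * qtrace D (qmult D y y) - qtrace D (qmult D x y) ^ 2"

definition is_square :: "'a::field \<Rightarrow> bool" where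
  "is_square D \<longleftrightarrow> (\<exists>y. D = y ^ 2)"

text \<open>ord of the discriminant ideal of F(sqrt D)/F: the ideal of o generated by all d(x,y)
with x,y integral; in the DVR o its ord is the minimum of the ords of the generators.\<close>
definition ord_disc_ideal :: "('a::field \<Rightarrow> int) \<Rightarrow> 'a \<Rightarrow> int" where
  "ord_disc_ideal ord D =
     (if is_square D then 0 else
      (THE m. m \<in> {ord (qdisc D x y) | x y. qintegral ord D x \<and> qintegral ord D y \<and> qdisc D x y \<noteq> 0}
          \<and> (\<forall>m'\<in>{ord (qdisc D x y) | x y. qintegral ord D x \<and> qintegral ord D y \<and> qdisc D x y \<noteq> 0}. m \<le> m')))"

text \<open>F(sqrt D)/F (D non-square) is unramified iff the (unique) extension w = ord o N / 2 of
ord has the same value group, i.e. ord N(x) is even for every nonzero x.\<close>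
definition qunramified :: "('a::field \<Rightarrow> int) \<Rightarrow> 'a \<Rightarrow> bool" where
  "qunramified ord D \<longleftrightarrow> (\<forall>x. x \<noteq> (0,0) \<longrightarrow> even (ord (qnorm D x)))"

definition xi_of :: "('a::field \<Rightarrow> int) \<Rightarrow> 'a \<Rightarrow> int" where
  "xi_of ord D = (if is_square D then 1 else if qunramified ord D then -1 else 0)"

definition DB :: "'a::field mat \<Rightarrow> 'a" where
  "DB B = (-4) ^ (dim_row B div 2) * det B"

definition xiB :: "('a::field \<Rightarrow> int) \<Rightarrow> 'a mat \<Rightarrow> int" where
  "xiB ord B = xi_of ord (DB B)"

definition DeltaB :: "('a::field \<Rightarrow> int) \<Rightarrow> 'a mat \<Rightarrow> int" where
  "DeltaB ord B = (if odd (dim_row B) then ord (DB B)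
      else ord (DB B) - ord_disc_ideal ord (DB B) + 1 - (xiB ord B)^2)"

definition unimod_diag :: "('a::field \<Rightarrow> int) \<Rightarrow> 'a mat \<Rightarrow> bool" where
  "unimod_diag ord C \<longleftrightarrow> (\<exists>m\<ge>1. C \<in> carrier_mat m m) \<and> diagonal_mat C
      \<and> (\<forall>i<dim_row C. is_unit ord (C $$ (i,i)))"

text \<open>C \<in> (1/2)(S_2(o)_e \<inter> GL_2(o)): 2C is symmetric 2x2 over o, with even diagonal and
invertible over o (determinant a unit).\<close>
definition half_even_unimod :: "('a::field \<Rightarrow> int) \<Rightarrow> 'a mat \<Rightarrow> bool" where
  "half_even_unimod ord C \<longleftrightarrow> C \<in> carrier_mat 2 2 \<and>
     (let M = (2::'a) \<cdot>\<^sub>m C in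
        M $$ (0,1) = M $$ (1,0)
      \<and> (\<forall>i<2. \<forall>j<2. integral ord (M $$ (i,j)))
      \<and> in_2o ord (M $$ (0,0)) \<and> in_2o ord (M $$ (1,1))
      \<and> is_unit ord (det M))"

text \<open>A pre-optimal decomposition is a list bs of pairs (k_i, C_i), i = 1..r (stored 0-indexed).\<close>

definition kk :: "(nat \<times> 'a mat) list \<Rightarrow> nat \<Rightarrow> nat" where
  "kk bs i = fst (bs ! (i - 1))"

definition CC :: "(nat \<times> 'a mat) list \<Rightarrow> nat \<Rightarrow> 'a mat" where
  "CC bs i = snd (bs ! (i - 1))"

definition form_of :: "(nat \<times> 'a::field mat) list \<Rightarrow> 'a mat" where
  "form_of bs = diag_block_mat (map (\<lambda>(k, C). (2::'a) ^ k \<cdot>\<^sub>m C) bs)"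

definition Bpre :: "(nat \<times> 'a::field mat) list \<Rightarrow> nat \<Rightarrow> 'a mat" where
  "Bpre bs j = form_of (take j bs)"

definition isD :: "('a::field \<Rightarrow> int) \<Rightarrow> (nat \<times> 'a mat) list \<Rightarrow> nat \<Rightarrow> bool" where
  "isD ord bs i \<longleftrightarrow> unimod_diag ord (CC bs i)"

definition inD :: "('a::field \<Rightarrow> int) \<Rightarrow> (nat \<times> 'a mat) list \<Rightarrow> nat \<Rightarrow> nat \<Rightarrow> bool" where
  "inD ord bs m j \<longleftrightarrow> 1 \<le> j \<and> j \<le> length bs \<and> kk bs j = m \<and> isD ord bs j"

definition inE :: "('a::field \<Rightarrow> int) \<Rightarrow> (nat \<times> 'a mat) list \<Rightarrow> nat \<Rightarrow> nat \<Rightarrow> bool" where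
  "inE ord bs m j \<longleftrightarrow> 1 \<le> j \<and> j \<le> length bs \<and> kk bs j = m \<and> \<not> isD ord bs j"

definition pre_optimal :: "('a::field \<Rightarrow> int) \<Rightarrow> (nat \<times> 'a mat) list \<Rightarrow> bool" where
  "pre_optimal ord bs \<longleftrightarrow>
    (\<forall>i\<in>{1..length bs}. unimod_diag ord (CC bs i) \<or> half_even_unimod ord (CC bs i))
  \<comment> \<open>PO1\<close>
  \<and> (\<forall>m. (\<Sum>j\<in>{j. inD ord bs m j}. dim_row (CC bs j)) \<le> 2
         \<and> (\<forall>i j l. inE ord bs m i \<longrightarrow> inE ord bs m j \<longrightarrow> i \<le> l \<longrightarrow> l \<le> j \<longrightarrow> inE ord bs m l))
  \<comment> \<open>PO2\<close>
  \<and> (\<forall>i j m1 m2. i < j \<longrightarrow>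
        (inD ord bs m1 i \<longrightarrow> inD ord bs m2 j \<longrightarrow> m1 \<le> m2)
      \<and> (inE ord bs m1 i \<longrightarrow> inE ord bs m2 j \<longrightarrow> m1 \<le> m2)
      \<and> (inD ord bs m1 i \<longrightarrow> inE ord bs m2 j \<longrightarrow> int m1 \<le> int m2 - 1)
      \<and> (inE ord bs m1 i \<longrightarrow> inD ord bs m2 j \<longrightarrow> m1 \<le> m2 + 1))
  \<comment> \<open>PO3\<close>
  \<and> (\<forall>i\<in>{1..length bs}. isD ord bs i \<and> dim_row (CC bs i) = 2 \<longrightarrow>
        i \<ge> 2 \<and>
        ((even (dim_row (Bpre bs i)) \<and> xiB ord (Bpre bs (i-1)) = 0 \<and> xiB ord (Bpre bs i) = 0)
       \<or> (odd (dim_row (Bpre bs (i-1))) \<and> even (ord (det (Bpre bs (i-1))) + int (kk bs i)))))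
  \<comment> \<open>PO4\<close>
  \<and> (\<forall>i\<in>{2..length bs}. int (kk bs i) = int (kk bs (i-1)) - 1 \<and> isD ord bs i \<and> \<not> isD ord bs (i-1) \<longrightarrow>
        dim_row (CC bs i) = 2 \<or>
        (dim_row (CC bs i) = 1 \<and>
          ((even (dim_row (Bpre bs i)) \<and> even (ord (det (Bpre bs i))))
         \<or> (odd (dim_row (Bpre bs i)) \<and> xiB ord (Bpre bs (i-1)) = 0))))
  \<comment> \<open>PO5\<close>
  \<and> (\<forall>i\<in>{1..<length bs}. isD ord bs i \<and> \<not> isD ord bs (i+1) \<and> int (kk bs i) = int (kk bs (i+1)) - 1 \<longrightarrow>
        dim_row (CC bs i) = 1 \<and>
          ((even (dim_row (Bpre bs i)) \<and> odd (ord (det (Bpre bs i))))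
         \<or> (odd (dim_row (Bpre bs i)) \<and> (i \<ge> 2 \<longrightarrow> xiB ord (Bpre bs (i-1)) \<noteq> 0))))
  \<comment> \<open>PO6\<close>
  \<and> (\<forall>i\<in>{1..<length bs}. even (dim_row (Bpre bs i)) \<and> isD ord bs i \<and> isD ord bs (i+1)
        \<and> kk bs (i+1) = kk bs i + 1 \<longrightarrow> xiB ord (Bpre bs i) = 0)"

end

theory Submission
  imports Defs
begin
definition vge :: "('a::field \<Rightarrow> int) \<Rightarrow> int \<Rightarrow> 'a \<Rightarrow> bool" where
  "vge ord n x \<longleftrightarrow> x = 0 \<or> n \<le> ord x"

locale Val =
  fixes ord :: "'a::field_char_0 \<Rightarrow> int"
  assumes F: "unram_ext_Q2 ord"
begin

lemma omult: "x \<noteq> 0 \<Longrightarrow> y \<noteq> 0 \<Longrightarrow> ord (x * y) = ord x + ord y"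
  using F unfolding unram_ext_Q2_def by blast

lemma oadd: "x \<noteq> 0 \<Longrightarrow> y \<noteq> 0 \<Longrightarrow> x + y \<noteq> 0 \<Longrightarrow> ord (x + y) \<ge> min (ord x) (ord y)"
  using F unfolding unram_ext_Q2_def by blast

lemma o2: "ord 2 = 1"
  using F unfolding unram_ext_Q2_def by blast

lemma o1: "ord 1 = 0"
  using omult[of 1 1] by simp

lemma ominus1: "ord (-1) = 0"
  using omult[of "-1" "-1"] o1 by simp

lemma ouminus: "ord (- x) = ord x"
proof (cases "x = 0")
  case False
  then show ?thesis using omult[of "-1" x] ominus1 by simp
qed simp

lemma oinv: "x \<noteq> 0 \<Longrightarrow> ord (inverse x) = - ord x"
  using omult[of x "inverse x"] o1 by simp

lemma odiv: "x \<noteq> 0 \<Longrightarrow> y \<noteq> 0 \<Longrightarrow> ord (x / y) = ord x - ord y"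
  by (simp add: divide_inverse omult oinv)

lemma opow: "x \<noteq> 0 \<Longrightarrow> ord (x ^ n) = int n * ord x"
  by (induct n) (auto simp: o1 omult algebra_simps)

lemma o4: "ord (4::'a) = 2"
  using omult[of 2 2] o2 by simp

lemma ostrict:
  assumes "x \<noteq> 0" "y \<noteq> 0" "ord x < ord y"
  shows "x + y \<noteq> 0 \<and> ord (x + y) = ord x"
proof -
  have ne: "x + y \<noteq> 0"
  proof
    assume "x + y = 0" then have "y = - x" by (metis add.commute eq_neg_iff_add_eq_0)
    then show False using assms ouminus by simp
  qed
  have "ord (x + y) \<ge> ord x" using oadd[OF assms(1,2) ne] assms by simp
  moreover have "ord x \<ge> min (ord (x + y)) (ord (-y))"
    using oadd[OF ne, of "-y"] assms by simp
  ultimately show ?thesis using ne assms ouminus[of y] by linarith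
qed

lemma vge0[simp]: "vge ord n 0" by (simp add: vge_def)

lemma vge_mono: "vge ord m x \<Longrightarrow> n \<le> m \<Longrightarrow> vge ord n x"
  by (auto simp: vge_def)

lemma vge_add: "vge ord n x \<Longrightarrow> vge ord n y \<Longrightarrow> vge ord n (x + y)"
  unfolding vge_def
proof (elim disjE)
  assume a: "n \<le> ord x" "n \<le> ord y"
  show "x + y = 0 \<or> n \<le> ord (x + y)"
  proof (cases "x = 0 \<or> y = 0 \<or> x + y = 0")
    case False
    then show ?thesis using oadd[of x y] a by auto
  qed (use a in auto)
qed auto

lemma vge_uminus: "vge ord n (- x) = vge ord n x"
  by (simp add: vge_def ouminus)

lemma vge_diff: "vge ord n x \<Longrightarrow> vge ord n y \<Longrightarrow> vge ord n (x - y)"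
  using vge_add[of n x "-y"] by (simp add: vge_uminus)

lemma vge_mult: "vge ord n x \<Longrightarrow> vge ord m y \<Longrightarrow> vge ord (n + m) (x * y)"
  by (cases "x = 0"; cases "y = 0") (auto simp: vge_def omult)

lemma vge_self: "vge ord (ord x) x" by (simp add: vge_def)

lemma vge_multc: "c \<noteq> 0 \<Longrightarrow> vge ord (n + ord c) (c * x) \<longleftrightarrow> vge ord n x"
  by (cases "x = 0") (auto simp: vge_def omult)

lemma vge_sq: "vge ord (2 * n) (x ^ 2) \<Longrightarrow> vge ord n x"
  by (cases "x = 0") (auto simp: vge_def opow)

lemma vge_sq': "vge ord (2 * n + 1) (x ^ 2) \<Longrightarrow> vge ord (n + 1) x"
  by (cases "x = 0") (auto simp: vge_def opow)

lemma vge_sum: "(\<And>i. i \<in> A \<Longrightarrow> vge ord n (f i)) \<Longrightarrow> vge ord n (sum f A)"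
  by (induct A rule: infinite_finite_induct) (auto intro: vge_add)

lemma unit_or: "vge ord 0 x \<Longrightarrow> \<not> vge ord 1 x \<Longrightarrow> x \<noteq> 0 \<and> ord x = 0"
  by (auto simp: vge_def)

lemma vge_big_zero: "(\<And>M. vge ord M x) \<Longrightarrow> x = 0"
  by (metis vge_def lt_ex not_le gt_ex)

lemma integral_vge: "integral ord x = vge ord 0 x" by (simp add: integral_def vge_def)
lemma in_2o_vge: "in_2o ord x = vge ord 1 x" by (simp add: in_2o_def vge_def)
lemma close_vge: "close ord M x y = vge ord M (x - y)" by (auto simp: close_def vge_def)

end

context Val begin

lemma frob:
  assumes u: "vge ord 0 u"
  shows "\<exists>s. vge ord 0 s \<and> vge ord 1 (u - s^2)"
proof -
  obtain S where finS: "finite S" and covS: "\<forall>x. vge ord 0 x \<longrightarrow> (\<exists>s\<in>S. vge ord 1 (x - s))"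
    using F unfolding unram_ext_Q2_def integral_vge in_2o_vge by blast
  define P where "P T \<longleftrightarrow> T \<subseteq> S \<and> (\<forall>x. vge ord 0 x \<longrightarrow> (\<exists>t\<in>T. vge ord 1 (x - t)))" for T
  have "P S" using covS by (simp add: P_def)
  then obtain T where PT: "P T" and minT: "\<And>T'. P T' \<Longrightarrow> card T \<le> card T'"
    using ex_has_least_nat[of P S card] by blast
  have finT: "finite T" using PT finS P_def finite_subset by auto
  have cov: "\<And>x. vge ord 0 x \<Longrightarrow> \<exists>t\<in>T. vge ord 1 (x - t)" using PT P_def by auto
  have intT: "vge ord 0 t" if t: "t \<in> T" for t
  proof (rule ccontr)
    assume nt: "\<not> vge ord 0 t"
    have "P (T - {t})" unfolding P_def
    proof (intro conjI allI impI)
      show "T - {t} \<subseteq> S" using PT P_def by auto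
      fix x assume x: "vge ord 0 x"
      then obtain t' where t': "t' \<in> T" "vge ord 1 (x - t')" using cov by blast
      have "vge ord 0 t'"
      proof -
        have "vge ord 0 (x - (x - t'))" using vge_diff[OF x vge_mono[OF t'(2), of 0]] by simp
        then show ?thesis by simp
      qed
      then have "t' \<noteq> t" using nt by auto
      then show "\<exists>t\<in>T - {t}. vge ord 1 (x - t)" using t' by auto
    qed
    then have "card T \<le> card (T - {t})" by (rule minT)
    then show False using t finT by (metis card_Diff1_less leD)
  qed
  have dist: "t1 = t2" if t12: "t1 \<in> T" "t2 \<in> T" "vge ord 1 (t1 - t2)" for t1 t2
  proof (rule ccontr)
    assume ne: "t1 \<noteq> t2"
    have "P (T - {t2})" unfolding P_def
    proof (intro conjI allI impI)
      show "T - {t2} \<subseteq> S" using PT P_def by auto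
      fix x assume x: "vge ord 0 x"
      then obtain t' where t': "t' \<in> T" "vge ord 1 (x - t')" using cov by blast
      show "\<exists>t\<in>T - {t2}. vge ord 1 (x - t)"
      proof (cases "t' = t2")
        case True
        have "vge ord 1 ((x - t') + (t1 - t2) * (-1))" using t' t12
          by (intro vge_add) (auto simp: vge_uminus[of _ "t1 - t2", symmetric])
        then have "vge ord 1 (x - t1)" using True by (simp add: algebra_simps)
        then show ?thesis using ne t12 by auto
      qed (use t' in auto)
    qed
    then have "card T \<le> card (T - {t2})" by (rule minT)
    then show False using t12 finT by (metis card_Diff1_less leD)
  qed
  define phi where "phi t = (SOME t'. t' \<in> T \<and> vge ord 1 (t^2 - t'))" for t
  have phi: "phi t \<in> T \<and> vge ord 1 (t^2 - phi t)" if "t \<in> T" for t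
  proof -
    have "vge ord 0 (t^2)" using intT[OF that] vge_mult[of 0 t 0 t] by (simp add: power2_eq_square)
    then have "\<exists>t'. t' \<in> T \<and> vge ord 1 (t^2 - t')" using cov by blast
    then show ?thesis unfolding phi_def by (rule someI_ex)
  qed
  have inj: "inj_on phi T"
  proof (rule inj_onI)
    fix t1 t2 assume t: "t1 \<in> T" "t2 \<in> T" "phi t1 = phi t2"
    have "vge ord 1 ((t1^2 - phi t1) - (t2^2 - phi t2))"
      using vge_diff[OF conjunct2[OF phi[OF t(1)]] conjunct2[OF phi[OF t(2)]]] .
    then have a: "vge ord 1 (t1^2 - t2^2)" using t by simp
    have b: "vge ord 1 (2 * t2 * (t1 - t2))"
    proof -
      have i1: "vge ord 0 t1" "vge ord 0 t2" using intT t by auto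
      have p: "vge ord (0 + 0) (t2 * (t1 - t2))" by (rule vge_mult[OF i1(2) vge_diff[OF i1]])
      have two: "vge ord 1 (2::'a)" by (simp add: vge_def o2)
      have "vge ord (1 + (0 + 0)) (2 * (t2 * (t1 - t2)))"
        using vge_mult[OF two p] .
      then show ?thesis by (simp add: mult.assoc)
    qed
    have "vge ord 1 ((t1^2 - t2^2) - 2 * t2 * (t1 - t2))" using a b by (rule vge_diff)
    moreover have "(t1^2 - t2^2) - 2 * t2 * (t1 - t2) = (t1 - t2)^2" by (simp add: power2_eq_square algebra_simps)
    ultimately have "vge ord (2 * 0 + 1) ((t1 - t2)^2)" by simp
    then have "vge ord 1 (t1 - t2)" using vge_sq'[of 0] by simp
    then show "t1 = t2" using dist t by blast
  qed
  have "phi ` T \<subseteq> T" using phi by auto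
  then have sur: "phi ` T = T" using endo_inj_surj[OF finT _ inj] by blast
  obtain t' where t': "t' \<in> T" "vge ord 1 (u - t')" using cov[OF u] by blast
  have "t' \<in> phi ` T" using sur t'(1) by simp
  then obtain t where t: "t \<in> T" "phi t = t'" by (auto simp del: sur)
  have "vge ord 1 ((u - t') - (t^2 - phi t))" using vge_diff[OF t'(2) conjunct2[OF phi[OF t(1)]]] .
  moreover have "(u - t') - (t^2 - phi t) = u - t^2" using t by simp
  ultimately have "vge ord 1 (u - t^2)" by simp
  then show ?thesis using intT[OF t(1)] by blast
qed

end

context Val begin

lemma unitd: assumes "vge ord 0 y" "s \<noteq> 0" "ord s = 0"
  shows "2*y + s \<noteq> 0 \<and> ord (2*y + s) = 0"
proof (cases "y = 0")
  case False
  then have y: "ord y \<ge> 0" using assms by (simp add: vge_def)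
  have "2 * y \<noteq> 0" using False by simp
  moreover have "ord (2 * y) = 1 + ord y" using False by (simp add: omult o2)
  ultimately have "s + 2*y \<noteq> 0 \<and> ord (s + 2*y) = ord s" using ostrict[of s "2*y"] assms y by simp
  then show ?thesis using assms by (simp add: add.commute)
qed (use assms in simp)

lemma hensel:
  assumes s: "s \<noteq> 0" "ord s = 0" and t: "vge ord 0 t" and v: "vge ord 0 v"
    and gv: "vge ord 1 (v^2 + s*v - t)"
  shows "\<exists>w. w^2 + s*w - t = 0"
proof -
  define g where "g w = w^2 + s*w - t" for w
  define step where "step y = y - g y / (2*y + s)" for y
  define x where "x n = (step ^^ n) v" for n
  have x0: "x 0 = v" and xS: "x (Suc n) = step (x n)" for n by (simp_all add: x_def)
  have sf: "vge ord e (step y - y) \<and> vge ord 0 (step y) \<and> vge ord (2*e) (g (step y))"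
    if y: "vge ord 0 y" and e: "vge ord e (g y)" "e \<ge> 0" for y e
  proof -
    define d where "d = - (g y) / (2*y + s)"
    have u: "2*y + s \<noteq> 0" "ord (2*y + s) = 0" using unitd[OF y s] by auto
    have iu: "vge ord 0 (inverse (2*y + s))" using u by (simp add: vge_def oinv)
    have "vge ord (e + 0) ((- g y) * inverse (2*y + s))"
      by (rule vge_mult) (use e iu in \<open>auto simp: vge_uminus\<close>)
    then have d: "vge ord e d" by (simp add: d_def divide_inverse)
    have sd: "step y = y + d" by (simp add: step_def d_def)
    have "(2*y + s) * d = - g y" using u by (simp add: d_def)
    then have "g (step y) = d^2" unfolding sd g_def
      by (simp add: power2_eq_square algebra_simps)
    moreover have "vge ord (e + e) (d * d)" by (rule vge_mult[OF d d])
    moreover have "2*e = e+e" by simp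
    ultimately have "vge ord (2*e) (g (step y))" by (simp only: power2_eq_square)
    moreover have "vge ord 0 (y + d)" using vge_add[OF y vge_mono[OF d e(2)]] .
    ultimately show ?thesis using d sd by simp
  qed
  have inv: "vge ord 0 (x n) \<and> vge ord (2^n) (g (x n))" for n
  proof (induct n)
    case 0 then show ?case using v gv by (simp add: x0 g_def)
  next
    case (Suc n)
    then show ?case using sf[of "x n" "2^n"] by (simp add: xS)
  qed
  have dif: "vge ord (2^n) (x (Suc n) - x n)" for n
    using sf[of "x n" "2^n"] inv[of n] by (simp add: xS)
  have C: "vge ord (int N) (x (N + d) - x N)" for N d
  proof (induct d)
    case (Suc d)
    have "int N \<le> 2^(N+d)"
    proof -
      have "N < 2^N" by (rule less_exp)
      also have "(2::nat)^N \<le> 2^(N+d)" by (rule power_increasing) auto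
      finally show ?thesis by (metis of_nat_le_iff of_nat_numeral of_nat_power less_imp_le)
    qed
    then have "vge ord (int N) (x (Suc (N + d)) - x (N + d))" using dif[of "N+d"] vge_mono by blast
    from vge_add[OF this Suc] show ?case by simp
  qed simp
  have cauchy: "\<forall>M. \<exists>N. \<forall>m\<ge>N. \<forall>n\<ge>N. close ord M (x m) (x n)"
  proof
    fix M
    show "\<exists>N. \<forall>m\<ge>N. \<forall>n\<ge>N. close ord M (x m) (x n)"
    proof (intro exI allI impI)
      fix m n assume mn: "nat M \<le> m" "nat M \<le> n"
      have a: "vge ord (int (nat M)) (x m - x (nat M))" using C[of "nat M" "m - nat M"] mn by simp
      have b: "vge ord (int (nat M)) (x n - x (nat M))" using C[of "nat M" "n - nat M"] mn by simp
      have "vge ord (int (nat M)) (x m - x n)" using vge_diff[OF a b] by simp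
      then show "close ord M (x m) (x n)" unfolding close_vge by (rule vge_mono) simp
    qed
  qed
  then obtain L where L: "\<forall>M. \<exists>N. \<forall>n\<ge>N. close ord M (x n) L"
    using F unfolding unram_ext_Q2_def by blast
  have "g L = 0"
  proof (rule vge_big_zero)
    fix M
    define M' :: int where "M' = max M 1"
    obtain N where N: "\<forall>n\<ge>N. close ord M' (x n) L" using L by blast
    define n where "n = max N (nat M')"
    have xl: "vge ord M' (x n - L)" using N n_def close_vge by auto
    have M'0: "M' \<ge> 0" by (simp add: M'_def)
    have Lint: "vge ord 0 L"
    proof -
      have "vge ord 0 (x n - (x n - L))" using vge_diff[OF conjunct1[OF inv[of n]] vge_mono[OF xl M'0]] .
      then show ?thesis by simp
    qed
    have "M' \<le> 2^n"
    proof -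
      have "nat M' < 2^n" using less_exp[of n] n_def by (meson le_less_trans max.cobounded2)
      then show ?thesis by (metis M'0 int_nat_eq less_imp_le of_nat_less_iff of_nat_numeral of_nat_power)
    qed
    then have g1: "vge ord M' (g (x n))" using conjunct2[OF inv[of n]] vge_mono by blast
    have s0: "vge ord 0 s" by (simp add: vge_def s)
    have "vge ord 0 (x n + L + s)" using vge_add[OF vge_add[OF conjunct1[OF inv[of n]] Lint] s0] .
    then have "vge ord (M' + 0) ((x n - L) * (x n + L + s))" by (rule vge_mult[OF xl])
    then have "vge ord M' (g (x n) - (x n - L) * (x n + L + s))" using vge_diff[OF g1] by simp
    moreover have "g (x n) - (x n - L) * (x n + L + s) = g L" by (simp add: g_def power2_eq_square algebra_simps)
    ultimately have "vge ord M' (g L)" by simp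
    then show "vge ord M (g L)" by (rule vge_mono) (simp add: M'_def)
  qed
  then show ?thesis unfolding g_def by blast
qed

end

definition Sset :: "('a::field \<Rightarrow> int) \<Rightarrow> 'a \<Rightarrow> int set" where
  "Sset ord D = {ord (qdisc D x y) | x y. qintegral ord D x \<and> qintegral ord D y \<and> qdisc D x y \<noteq> 0}"

lemma qdisc_eq: "qdisc D x y = 4 * D * (fst x * snd y - snd x * fst y)^2"
  by (simp add: qdisc_def qtrace_def qmult_def power2_eq_square algebra_simps)

lemma qnorm_eq: "qnorm D x = fst x ^ 2 - D * snd x ^ 2"
  by (simp add: qnorm_def)

lemma odi_eq: "\<not> is_square D \<Longrightarrow> m \<in> Sset ord D \<Longrightarrow> (\<forall>m'\<in>Sset ord D. m \<le> m') \<Longrightarrow> ord_disc_ideal ord D = m"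
  unfolding ord_disc_ideal_def Sset_def[symmetric]
  by (simp, rule the_equality) (auto intro: antisym)

context Val begin

lemma qint_iff: "qintegral ord D x \<longleftrightarrow> vge ord 0 (2 * fst x) \<and> vge ord 0 (fst x ^ 2 - D * snd x ^ 2)"
  by (simp add: qintegral_def qtrace_def qnorm_def integral_vge)

lemma sq_scale1: "is_square D \<Longrightarrow> is_square (c^2 * D)"
  unfolding is_square_def by (metis power_mult_distrib)

lemma sq_scale: "(c::'a) \<noteq> 0 \<Longrightarrow> is_square (c^2 * D) \<longleftrightarrow> is_square D"
  using sq_scale1[of D c] sq_scale1[of "c^2*D" "inverse c"]
  by (auto simp: power_inverse field_simps)

lemma unr_scale1: "qunramified ord D \<Longrightarrow> c \<noteq> 0 \<Longrightarrow> qunramified ord (c^2 * D)"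
  unfolding qunramified_def
proof (intro allI impI)
  fix x :: "'a \<times> 'a"
  assume u: "\<forall>x. x \<noteq> (0, 0) \<longrightarrow> even (ord (qnorm D x))" and c: "c \<noteq> 0" and x: "x \<noteq> (0,0)"
  have "(fst x, c * snd x) \<noteq> (0,0)" using x c by (cases x) auto
  then have "even (ord (qnorm D (fst x, c * snd x)))" using u by blast
  moreover have "qnorm D (fst x, c * snd x) = qnorm (c^2 * D) x"
    by (simp add: qnorm_def power_mult_distrib algebra_simps)
  ultimately show "even (ord (qnorm (c^2 * D) x))" by simp
qed

lemma unr_scale: "(c::'a) \<noteq> 0 \<Longrightarrow> qunramified ord (c^2 * D) \<longleftrightarrow> qunramified ord D"
  using unr_scale1[of D c] unr_scale1[of "c^2*D" "inverse c"]
  by (auto simp: power_inverse field_simps)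

lemma xi_scale: "(c::'a) \<noteq> 0 \<Longrightarrow> xi_of ord (c^2 * D) = xi_of ord D"
  by (simp add: xi_of_def sq_scale unr_scale)

lemma Sset_scale1: "c \<noteq> 0 \<Longrightarrow> Sset ord (c^2 * D) \<subseteq> Sset ord D"
proof
  fix m assume c: "c \<noteq> 0" and "m \<in> Sset ord (c^2 * D)"
  then obtain x y where xy: "m = ord (qdisc (c^2*D) x y)" "qintegral ord (c^2*D) x"
    "qintegral ord (c^2*D) y" "qdisc (c^2*D) x y \<noteq> 0" unfolding Sset_def by blast
  define x' where "x' = (fst x, c * snd x)"
  define y' where "y' = (fst y, c * snd y)"
  have e: "qdisc D x' y' = qdisc (c^2*D) x y"
    by (simp add: qdisc_eq x'_def y'_def power2_eq_square algebra_simps)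
  have "qintegral ord D x'" "qintegral ord D y'" using xy(2,3)
    by (simp_all add: qint_iff x'_def y'_def power_mult_distrib algebra_simps)
  then show "m \<in> Sset ord D" unfolding Sset_def using xy e by (metis (mono_tags, lifting) mem_Collect_eq)
qed

lemma Sset_scale: "(c::'a) \<noteq> 0 \<Longrightarrow> Sset ord (c^2 * D) = Sset ord D"
  using Sset_scale1[of c D] Sset_scale1[of "inverse c" "c^2*D"]
  by (auto simp: power_inverse field_simps)

lemma odi_scale: "(c::'a) \<noteq> 0 \<Longrightarrow> ord_disc_ideal ord (c^2 * D) = ord_disc_ideal ord D"
  unfolding ord_disc_ideal_def Sset_def[symmetric] by (simp add: sq_scale Sset_scale)

end

context Val begin

lemma vge_iff: "x \<noteq> 0 \<Longrightarrow> vge ord n x \<longleftrightarrow> n \<le> ord x" by (simp add: vge_def)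

lemma vge_half: "vge ord (n + 1) (2 * a) \<longleftrightarrow> vge ord n a"
  using vge_multc[of 2 n a] by (simp add: o2)

lemma vge_mult0: "vge ord 0 x \<Longrightarrow> vge ord 0 y \<Longrightarrow> vge ord 0 (x * y)"
  using vge_mult[of 0 x 0 y] by simp

lemma vge_multr: "vge ord n x \<Longrightarrow> vge ord 0 y \<Longrightarrow> vge ord n (x * y)"
  using vge_mult[of n x 0 y] by simp

lemma vge_multl: "vge ord 0 x \<Longrightarrow> vge ord n y \<Longrightarrow> vge ord n (x * y)"
  using vge_mult[of 0 x n y] by simp

lemma vge4: "vge ord 2 (4::'a)" by (simp add: vge_def o4)

lemma odd_ext:
  assumes u: "u \<noteq> 0" "ord u = 1" and E: "vge ord 2 (A^2 - u*B^2)"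
  shows "vge ord 1 A \<and> vge ord 1 B"
proof (cases "A = 0 \<or> B = 0")
  case True
  then show ?thesis
  proof
    assume A: "A = 0"
    have "vge ord 2 (u * B^2)" using E A by (simp add: vge_uminus[of _ "u*B^2", symmetric])
    then show ?thesis using A u by (cases "B = 0") (auto simp: vge_def omult opow)
  next
    assume B: "B = 0"
    have "vge ord (2*1) (A^2)" using E B by simp
    then show ?thesis using B vge_sq by auto
  qed
next
  case False
  then have A: "A \<noteq> 0" and B: "B \<noteq> 0" by auto
  define p where "p = A^2"
  define q where "q = - (u * B^2)"
  have p0: "p \<noteq> 0" "ord p = 2 * ord A" using A by (auto simp: p_def opow)
  have q0: "q \<noteq> 0" "ord q = 1 + 2 * ord B" using B u by (auto simp: q_def ouminus omult opow)
  have pq: "A^2 - u*B^2 = p + q" by (simp add: p_def q_def)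
  have "ord p \<noteq> ord q" using p0 q0 by presburger
  then have "ord p < ord q \<or> ord q < ord p" by linarith
  then have "p + q \<noteq> 0 \<and> ord (p + q) = min (ord p) (ord q)"
    using ostrict[OF p0(1) q0(1)] ostrict[OF q0(1) p0(1)] by (auto simp: add.commute)
  then have "2 \<le> ord p \<and> 2 \<le> ord q" using E pq by (simp add: vge_def)
  then show ?thesis using p0 q0 A B by (simp add: vge_def)
qed

lemma ext0:
  assumes x: "qintegral ord D x"
  shows "vge ord 0 (2 * fst x) \<and> vge ord 2 ((2 * fst x)^2 - D * (2 * snd x)^2)"
proof -
  have a: "vge ord 0 (2 * fst x)" "vge ord 0 (fst x ^ 2 - D * snd x ^ 2)" using x by (auto simp: qint_iff)
  have "vge ord (2 + 0) (4 * (fst x ^ 2 - D * snd x ^ 2))" by (rule vge_mult[OF vge4 a(2)])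
  moreover have "4 * (fst x ^ 2 - D * snd x ^ 2) = (2 * fst x)^2 - D * (2 * snd x)^2"
    by (simp add: power2_eq_square algebra_simps)
  ultimately show ?thesis using a by (metis add_0_right)
qed

lemma base_odd:
  assumes u: "u \<noteq> 0" "ord u = 1"
  shows "xi_of ord u = 0 \<and> ord_disc_ideal ord u = 3"
proof -
  have nsq: "\<not> is_square u"
  proof
    assume "is_square u" then obtain y where "u = y^2" by (auto simp: is_square_def)
    then show False using u by (cases "y = 0") (auto simp: opow, presburger)
  qed
  have nunr: "\<not> qunramified ord u"
  proof
    assume "qunramified ord u"
    then have "even (ord (qnorm u (0,1)))" unfolding qunramified_def by auto
    then show False using u by (simp add: qnorm_def ouminus)
  qed
  have ext: "vge ord 0 (fst x) \<and> vge ord 0 (snd x)" if x: "qintegral ord u x" for x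
  proof -
    from ext0[OF x] have "vge ord 1 (2 * fst x) \<and> vge ord 1 (2 * snd x)" using odd_ext[OF u] by blast
    then show ?thesis using vge_half[of 0] by simp
  qed
  have lb: "3 \<le> m" if m: "m \<in> Sset ord u" for m
  proof -
    obtain x y where xy: "m = ord (qdisc u x y)" "qintegral ord u x"
      "qintegral ord u y" "qdisc u x y \<noteq> 0" using m unfolding Sset_def by blast
    have "vge ord (0 + 0) (fst x * snd y)" "vge ord (0 + 0) (snd x * fst y)"
      using ext[OF xy(2)] ext[OF xy(3)] by (auto intro: vge_mult0)
    then have d: "vge ord 0 (fst x * snd y - snd x * fst y)" by (simp add: vge_diff)
    have "vge ord (0 + 0) ((fst x * snd y - snd x * fst y)^2)" using vge_mult[OF d d] by (simp add: power2_eq_square)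
    moreover have "vge ord 3 (4 * u)" using u by (simp add: vge_def omult o4)
    ultimately have "vge ord (3 + 0) (4 * u * (fst x * snd y - snd x * fst y)^2)" by (intro vge_mult) auto
    then show ?thesis using xy by (simp add: qdisc_eq vge_def)
  qed
  have w: "3 \<in> Sset ord u"
  proof -
    have "qdisc u (1,0) (0,1) = 4 * u" by (simp add: qdisc_eq)
    moreover have "ord (4 * u) = 3" using u by (simp add: omult o4)
    moreover have "qintegral ord u (1,0)" "qintegral ord u (0,1)" using u
      by (auto simp: qint_iff vge_def o2 ouminus o1)
    ultimately show ?thesis unfolding Sset_def using u
      by (smt (verit) mem_Collect_eq mult_eq_0_iff zero_neq_numeral)
  qed
  show ?thesis using odi_eq[OF nsq w] lb nsq nunr by (simp add: xi_of_def)
qed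

lemma ext_unit:
  assumes u: "u \<noteq> 0" "ord u = 0" and x: "qintegral ord u x"
  shows "vge ord 0 (2 * fst x) \<and> vge ord 0 (2 * snd x) \<and> vge ord 2 ((2 * fst x)^2 - u * (2 * snd x)^2)"
proof -
  define A where "A = 2 * fst x"
  define B where "B = 2 * snd x"
  have A: "vge ord 0 A" and E: "vge ord 2 (A^2 - u * B^2)" using ext0[OF x] by (auto simp: A_def B_def)
  have "vge ord 0 (A^2 - (A^2 - u * B^2))"
    using vge_diff[OF vge_mult0[OF A A] vge_mono[OF E]] by (simp add: power2_eq_square)
  then have "vge ord 0 (u * B^2)" by simp
  then have "vge ord 0 B" using u by (cases "B = 0") (auto simp: vge_def omult opow)
  then show ?thesis using A E by (simp add: A_def B_def)
qed

lemma vge_unit_ord: "x \<noteq> 0 \<Longrightarrow> ord x = 0 \<Longrightarrow> vge ord 0 x" by (simp add: vge_def)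

lemma base_ram:
  assumes u: "u \<noteq> 0" "ord u = 0" and ns: "\<not> (\<exists>s. vge ord 2 (u - s^2))"
  shows "xi_of ord u = 0 \<and> ord_disc_ideal ord u = 2"
proof -
  have nsq: "\<not> is_square u"
  proof
    assume "is_square u" then obtain y where "u = y^2" by (auto simp: is_square_def)
    then show False using ns[unfolded not_ex, rule_format, of y] by simp
  qed
  have nunr: "\<not> qunramified ord u"
  proof
    assume un: "qunramified ord u"
    obtain s where s: "vge ord 0 s" "vge ord 1 (u - s^2)" using frob[OF vge_unit_ord[OF u]] by blast
    have ne: "u - s^2 \<noteq> 0" "ord (u - s^2) = 1" using s(2) ns[unfolded not_ex, rule_format, of s] by (auto simp: vge_def)
    have "even (ord (qnorm u (s,1)))" using un unfolding qunramified_def by auto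
    moreover have "qnorm u (s,1) = - (u - s^2)" by (simp add: qnorm_def)
    ultimately show False using ne using ouminus[of "u - s^2"] by simp
  qed
  have ext: "vge ord 0 (fst x) \<and> vge ord 0 (snd x)" if x: "qintegral ord u x" for x
  proof -
    define A where "A = 2 * fst x"
    define B where "B = 2 * snd x"
    have A: "vge ord 0 A" and B: "vge ord 0 B" and E: "vge ord 2 (A^2 - u * B^2)"
      using ext_unit[OF u x] by (auto simp: A_def B_def)
    have B1: "vge ord 1 B"
    proof (rule ccontr)
      assume "\<not> vge ord 1 B"
      then have B0: "B \<noteq> 0" "ord B = 0" using B by (auto simp: vge_def)
      have "vge ord 0 (inverse (B^2))" using B0 by (simp add: vge_def oinv opow)
      then have "vge ord 2 (- (A^2 - u * B^2) * inverse (B^2))"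
        using vge_multr[OF E[folded vge_uminus[of _ "A^2 - u * B^2"]]] by blast
      moreover have "- (A^2 - u * B^2) * inverse (B^2) = u - (A / B)^2"
        using B0 by (simp add: field_simps power2_eq_square)
      ultimately show False using ns by auto
    qed
    have "vge ord (0 + (1 + 1)) (u * (B * B))" using u B1 by (intro vge_mult vge_unit_ord) auto
    then have "vge ord 2 (u * B^2)" by (simp add: power2_eq_square)
    then have "vge ord 2 ((A^2 - u * B^2) + u * B^2)" by (rule vge_add[OF E])
    then have "vge ord (2 * 1) (A^2)" by simp
    then have "vge ord 1 A" by (rule vge_sq)
    then show ?thesis using B1 vge_half[of 0] by (simp add: A_def B_def)
  qed
  have lb: "2 \<le> m" if m: "m \<in> Sset ord u" for m
  proof -
    obtain x y where xy: "m = ord (qdisc u x y)" "qintegral ord u x"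
      "qintegral ord u y" "qdisc u x y \<noteq> 0" using m unfolding Sset_def by blast
    have "vge ord 0 (fst x * snd y)" "vge ord 0 (snd x * fst y)"
      using ext[OF xy(2)] ext[OF xy(3)] by (auto intro: vge_mult0)
    then have d: "vge ord 0 (fst x * snd y - snd x * fst y)" by (simp add: vge_diff)
    have "vge ord 0 ((fst x * snd y - snd x * fst y)^2)" using vge_mult0[OF d d] by (simp add: power2_eq_square)
    moreover have "vge ord 2 (4 * u)" using u by (simp add: vge_def omult o4)
    ultimately have "vge ord 2 (4 * u * (fst x * snd y - snd x * fst y)^2)" by (rule vge_multr[rotated])
    then show ?thesis using xy by (simp add: qdisc_eq vge_def)
  qed
  have w: "2 \<in> Sset ord u"
  proof -
    have "qdisc u (1,0) (0,1) = 4 * u" by (simp add: qdisc_eq)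
    moreover have "ord (4 * u) = 2" using u by (simp add: omult o4)
    moreover have "qintegral ord u (1,0)" "qintegral ord u (0,1)" using u
      by (auto simp: qint_iff vge_def o2 ouminus o1)
    ultimately show ?thesis unfolding Sset_def using u
      by (smt (verit) mem_Collect_eq mult_eq_0_iff zero_neq_numeral)
  qed
  show ?thesis using odi_eq[OF nsq w] lb nsq nunr by (simp add: xi_of_def)
qed

lemma s_unit:
  assumes u: "u \<noteq> 0" "ord u = 0" and s: "vge ord 2 (u - s^2)"
  shows "s \<noteq> 0 \<and> ord s = 0"
proof -
  have "s^2 \<noteq> 0 \<and> ord (s^2) = 0"
  proof (cases "u - s^2 = 0")
    case True then show ?thesis using u by simp
  next
    case False
    then have "ord (u - s^2) \<ge> 2" using s by (simp add: vge_def)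
    then have o: "ord u < ord (- (u - s^2))" using u ouminus[of "u - s^2"] by simp
    have n: "- (u - s^2) \<noteq> 0" using False by simp
    have "u + - (u - s^2) \<noteq> 0 \<and> ord (u + - (u - s^2)) = ord u" by (rule ostrict[OF u(1) n o])
    moreover have "u + - (u - s^2) = s^2" by simp
    ultimately show ?thesis using u by simp
  qed
  then show ?thesis by (auto simp: opow)
qed

lemma unr_core:
  assumes u: "u \<noteq> 0" "ord u = 0" and s: "vge ord 2 (u - s^2)" and nsq: "\<not> is_square u"
    and g: "g \<noteq> 0" "ord g = 0" and ne: "g^2 - u \<noteq> 0"
  shows "even (ord (g^2 - u))"
proof -
  have s0: "s \<noteq> 0" "ord s = 0" using s_unit[OF u s] by auto
  define w where "w = g - s"
  have w0: "vge ord 0 w" unfolding w_def using g s0 by (intro vge_diff) (auto simp: vge_def)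
  show ?thesis
  proof (cases "vge ord 1 w")
    case False
    then have w1: "w \<noteq> 0" "ord w = 0" using w0 by (auto simp: vge_def)
    have "2 * s \<noteq> 0" "ord (2 * s) = 1" using s0 by (auto simp: omult o2)
    then have ws: "w + 2 * s \<noteq> 0 \<and> ord (w + 2 * s) = 0" using ostrict[of w "2*s"] w1 by simp
    define P where "P = w * (w + 2 * s)"
    have P: "P \<noteq> 0" "ord P = 0" using w1 ws by (auto simp: P_def omult)
    have eq: "g^2 - u = P + - (u - s^2)" by (simp add: P_def w_def power2_eq_square algebra_simps)
    show ?thesis
    proof (cases "u - s^2 = 0")
      case True then show ?thesis using eq P by simp
    next
      case False
      then have "ord (u - s^2) \<ge> 2" using s by (simp add: vge_def)
      then have o: "ord P < ord (- (u - s^2))" using P ouminus[of "u - s^2"] by simp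
      have n: "- (u - s^2) \<noteq> 0" using False by simp
      have "P + - (u - s^2) \<noteq> 0 \<and> ord (P + - (u - s^2)) = ord P" by (rule ostrict[OF P(1) n o])
      then have "ord (g^2 - u) = 0" unfolding eq using P by simp
      then show ?thesis by simp
    qed
  next
    case True
    define v where "v = w / 2"
    have wv: "w = 2 * v" by (simp add: v_def)
    have v0: "vge ord 0 v" using True vge_half[of 0 v] wv by simp
    define t where "t = (u - s^2) / 4"
    have ut: "u - s^2 = 4 * t" by (simp add: t_def)
    have t0: "vge ord 0 t" using vge_multc[of 4 0 t] s ut by (simp add: o4)
    define h where "h = v^2 + s * v - t"
    have gv: "g = s + 2 * v" using wv w_def by (metis add.commute diff_add_cancel)
    have u': "u = s^2 + 4 * t" using ut by (metis add.commute diff_add_cancel)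
    have eq: "g^2 - u = 4 * h" unfolding h_def gv u' by (simp add: power2_eq_square algebra_simps)
    have h0: "h \<noteq> 0" using eq ne by simp
    have si: "vge ord 0 s" using s0 by (simp add: vge_def)
    have a1: "vge ord 0 (v^2)" using vge_mult0[OF v0 v0] by (simp add: power2_eq_square)
    have a2: "vge ord 0 (s*v)" by (rule vge_mult0[OF si v0])
    have hint: "vge ord 0 h" unfolding h_def by (rule vge_diff[OF vge_add[OF a1 a2] t0])
    have "\<not> vge ord 1 h"
    proof
      assume "vge ord 1 h"
      then obtain v0' where r: "v0'^2 + s * v0' - t = 0" using hensel[OF s0 t0 v0] by (auto simp: h_def)
      have t': "t = v0'^2 + s * v0'" using r by simp
      have "u = (s + 2 * v0')^2" unfolding u' t' by (simp add: power2_eq_square algebra_simps)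
      then show False using nsq by (auto simp: is_square_def)
    qed
    then have "ord h = 0" using hint by (simp add: vge_def)
    then show ?thesis using eq h0 by (simp add: omult o4)
  qed
qed

end

context Val begin
lemma unr_norm:
  assumes u: "u \<noteq> 0" "ord u = 0" and s: "vge ord 2 (u - s^2)" and nsq: "\<not> is_square u"
  shows "qunramified ord u"
  unfolding qunramified_def
proof (intro allI impI)
  fix z :: "'a \<times> 'a" assume z: "z \<noteq> (0,0)"
  obtain p q where pq: "z = (p, q)" by (cases z)
  have N: "qnorm u z = p^2 - u * q^2" by (simp add: pq qnorm_def)
  show "even (ord (qnorm u z))"
  proof (cases "q = 0")
    case True
    then have "p \<noteq> 0" using z pq by auto
    then show ?thesis using N True by (simp add: opow)
  next
    case q: False
    show ?thesis
    proof (cases "p = 0")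
      case True
      then show ?thesis using N q u by (simp add: ouminus omult opow)
    next
      case p: False
      have Nne: "p^2 - u * q^2 \<noteq> 0"
      proof
        assume "p^2 - u * q^2 = 0"
        then have "u * q^2 = p^2" by simp
        then have "u = (p / q)^2" using q by (simp add: power_divide eq_divide_eq)
        then show False using nsq by (auto simp: is_square_def)
      qed
      have op: "ord (p^2) = 2 * ord p" "p^2 \<noteq> 0" using p by (auto simp: opow)
      have oq: "ord (- (u * q^2)) = 2 * ord q" "- (u * q^2) \<noteq> 0" using q u by (auto simp: opow ouminus omult)
      have N2: "p^2 - u * q^2 = p^2 + - (u * q^2)" by simp
      show ?thesis
      proof (cases "ord p = ord q")
        case False
        then have "ord p < ord q \<or> ord q < ord p" by linarith
        then have "ord (p^2 + - (u * q^2)) = min (ord (p^2)) (ord (- (u * q^2)))"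
        proof
          assume "ord p < ord q"
          then have "ord (p^2) < ord (- (u * q^2))" using op(1) oq(1) by linarith
          then have "ord (p^2 + - (u * q^2)) = ord (p^2)" using ostrict[OF op(2) oq(2)] by blast
          with \<open>ord (p^2) < ord (- (u * q^2))\<close> show ?thesis by linarith
        next
          assume "ord q < ord p"
          then have "ord (- (u * q^2)) < ord (p^2)" using op(1) oq(1) by linarith
          then have "ord (- (u * q^2) + p^2) = ord (- (u * q^2))" using ostrict[OF oq(2) op(2)] by blast
          then have "ord (p^2 + - (u * q^2)) = ord (- (u * q^2))" by (simp only: add.commute)
          with \<open>ord (- (u * q^2)) < ord (p^2)\<close> show ?thesis by linarith
        qed
        then have "ord (qnorm u z) = min (2 * ord p) (2 * ord q)" unfolding N N2 op(1) oq(1) .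
        then show ?thesis by (simp add: min_def)
      next
        case True
        define g where "g = p / q"
        have g: "g \<noteq> 0" "ord g = 0" using p q True by (auto simp: g_def odiv)
        have eq: "p^2 - u * q^2 = q^2 * (g^2 - u)" using q by (simp add: g_def power_divide right_diff_distrib)
        have gne: "g^2 - u \<noteq> 0" using Nne eq by simp
        have "even (ord (g^2 - u))" by (rule unr_core[OF u s nsq g gne])
        moreover have "ord (qnorm u z) = 2 * ord q + ord (g^2 - u)"
          unfolding N eq using q gne by (simp add: omult opow)
        ultimately show ?thesis by simp
      qed
    qed
  qed
qed

lemma vge_inv4: "vge ord (-2) (inverse (4::'a))"
  unfolding vge_def using oinv[of "4::'a"] o4 by simp

lemma base_unr:
  assumes u: "u \<noteq> 0" "ord u = 0" and s: "vge ord 2 (u - s^2)"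
  shows "xi_of ord u \<noteq> 0 \<and> ord_disc_ideal ord u = 0"
proof (cases "is_square u")
  case True then show ?thesis by (simp add: xi_of_def ord_disc_ideal_def)
next
  case nsq: False
  have unr: "qunramified ord u" by (rule unr_norm[OF u s nsq])
  have s0: "s \<noteq> 0" "ord s = 0" using s_unit[OF u s] by auto
  have lb: "0 \<le> m" if m: "m \<in> Sset ord u" for m
  proof -
    obtain x y where xy: "m = ord (qdisc u x y)" "qintegral ord u x"
      "qintegral ord u y" "qdisc u x y \<noteq> 0" using m unfolding Sset_def by blast
    define A where "A = 2 * fst x"
    define B where "B = 2 * snd x"
    define C where "C = 2 * fst y"
    define E where "E = 2 * snd y"
    have A: "vge ord 0 A" and B: "vge ord 0 B" and E1: "vge ord 2 (A^2 - u * B^2)"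
      using ext_unit[OF u xy(2)] by (auto simp: A_def B_def)
    have C: "vge ord 0 C" and E: "vge ord 0 E" and E2: "vge ord 2 (C^2 - u * E^2)"
      using ext_unit[OF u xy(3)] by (auto simp: C_def E_def)
    define X where "X = A * E"
    define Y where "Y = B * C"
    have X: "vge ord 0 X" unfolding X_def by (rule vge_mult0[OF A E])
    have Y: "vge ord 0 Y" unfolding Y_def by (rule vge_mult0[OF B C])
    have E2': "vge ord 0 (E^2)" using vge_mult0[OF E E] by (simp add: power2_eq_square)
    have B2': "vge ord 0 (B^2)" using vge_mult0[OF B B] by (simp add: power2_eq_square)
    have "vge ord 2 ((A^2 - u * B^2) * E^2 - B^2 * (C^2 - u * E^2))"
      by (rule vge_diff[OF vge_multr[OF E1 E2'] vge_multl[OF B2' E2]])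
    moreover have "(A^2 - u * B^2) * E^2 - B^2 * (C^2 - u * E^2) = X^2 - Y^2"
      by (simp add: X_def Y_def power2_eq_square algebra_simps)
    ultimately have d2: "vge ord 2 (X^2 - Y^2)" by simp
    have two: "vge ord 1 (2::'a)" by (simp add: vge_def o2)
    have "vge ord 1 (2 * (Y * (X - Y)))" by (rule vge_multr[OF two vge_mult0[OF Y vge_diff[OF X Y]]])
    then have "vge ord 1 ((X^2 - Y^2) - 2 * (Y * (X - Y)))" using vge_diff[OF vge_mono[OF d2, of 1]] by simp
    moreover have "(X^2 - Y^2) - 2 * (Y * (X - Y)) = (X - Y)^2" by (simp add: power2_eq_square algebra_simps)
    ultimately have "vge ord (2 * 0 + 1) ((X - Y)^2)" by simp
    then have xy1: "vge ord 1 (X - Y)" using vge_sq'[of 0] by simp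
    have "vge ord (1 + 1) ((X - Y) * (X - Y))" by (rule vge_mult[OF xy1 xy1])
    then have "vge ord (0 + (2 + -2)) (u * ((X - Y) * (X - Y) * inverse 4))"
      by (intro vge_mult vge_unit_ord u vge_inv4) simp_all
    moreover have "u * ((X - Y) * (X - Y) * inverse 4) = qdisc u x y"
      by (simp add: qdisc_eq X_def Y_def A_def B_def C_def E_def power2_eq_square field_simps)
    ultimately have "vge ord 0 (qdisc u x y)" by simp
    then show ?thesis using xy by (simp add: vge_def)
  qed
  have w: "0 \<in> Sset ord u"
  proof -
    have q: "qdisc u (1,0) (s/2, 1/2) = u" by (simp add: qdisc_eq power2_eq_square)
    have i1: "qintegral ord u (1,0)" by (simp add: qint_iff vge_def o2 o1)
    have "vge ord (2 + -2) ((u - s^2) * - inverse 4)"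
      by (rule vge_mult[OF s]) (simp only: vge_uminus vge_inv4)
    moreover have "(u - s^2) * - inverse 4 = (s/2)^2 - u * (1/2)^2"
      by (simp add: power2_eq_square field_simps)
    ultimately have "vge ord 0 ((s/2)^2 - u * (1/2)^2)" by simp
    moreover have "vge ord 0 (2 * (s/2))" using s0 by (simp add: vge_def)
    ultimately have i2: "qintegral ord u (s/2, 1/2)" by (simp add: qint_iff)
    show ?thesis unfolding Sset_def using q i1 i2 u
      by (smt (verit) mem_Collect_eq)
  qed
  show ?thesis using odi_eq[OF nsq w] lb nsq unr by (simp add: xi_of_def)
qed

definition sqa :: "'a \<Rightarrow> bool" where
  "sqa D \<longleftrightarrow> (\<exists>s. vge ord (ord D + 2) (D - s^2))"

lemma normalize:
  assumes D: "D \<noteq> 0"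
  shows "\<exists>c. c \<noteq> 0 \<and> ord (c^2 * D) = ord D mod 2"
proof -
  define j where "j = ord D div 2"
  define c :: 'a where "c = (if j \<ge> 0 then inverse 2 ^ nat j else 2 ^ nat (-j))"
  have c0: "c \<noteq> 0" by (simp add: c_def)
  have h2: "ord (1 / (2::'a)) = -1" using oinv[of "2::'a"] o2 by simp
  have oc: "ord c = - j"
    by (cases "j \<ge> 0") (simp_all add: c_def opow h2 o2)
  have "ord (c^2 * D) = 2 * ord c + ord D" using c0 D by (simp add: omult opow)
  also have "\<dots> = ord D mod 2" using oc by (simp add: j_def) (metis minus_div_mult_eq_mod mult.commute)
  finally show ?thesis using c0 by blast
qed

lemma sqa_scale1: "c \<noteq> 0 \<Longrightarrow> D \<noteq> 0 \<Longrightarrow> sqa D \<Longrightarrow> sqa (c^2 * D)"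
  unfolding sqa_def
proof (elim exE)
  fix s assume c: "c \<noteq> 0" and D: "D \<noteq> 0" and s: "vge ord (ord D + 2) (D - s^2)"
  have c2: "c^2 \<noteq> 0" using c by simp
  have "vge ord (ord D + 2 + ord (c^2)) (c^2 * (D - s^2))" using vge_multc[OF c2] s by blast
  moreover have "c^2 * (D - s^2) = c^2 * D - (c * s)^2" by (simp add: power2_eq_square algebra_simps)
  moreover have "ord (c^2 * D) = ord (c^2) + ord D" using c2 D by (simp add: omult)
  ultimately have "vge ord (ord (c^2 * D) + 2) (c^2 * D - (c * s)^2)" by (simp add: algebra_simps)
  then show "\<exists>s. vge ord (ord (c^2 * D) + 2) (c^2 * D - s^2)" by blast
qed

lemma sqa_scale: "c \<noteq> 0 \<Longrightarrow> D \<noteq> 0 \<Longrightarrow> sqa (c^2 * D) \<longleftrightarrow> sqa D"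
  using sqa_scale1[of c D] sqa_scale1[of "inverse c" "c^2*D"]
  by (auto simp: power_inverse field_simps)

lemma corr_all:
  assumes D: "D \<noteq> 0"
  shows "(odd (ord D) \<longrightarrow> xi_of ord D = 0 \<and> ord_disc_ideal ord D = 3)
    \<and> (even (ord D) \<and> \<not> sqa D \<longrightarrow> xi_of ord D = 0 \<and> ord_disc_ideal ord D = 2)
    \<and> (even (ord D) \<and> sqa D \<longrightarrow> xi_of ord D \<noteq> 0 \<and> ord_disc_ideal ord D = 0)"
proof -
  obtain c where c: "c \<noteq> 0" "ord (c^2 * D) = ord D mod 2" using normalize[OF D] by blast
  define u where "u = c^2 * D"
  have u0: "u \<noteq> 0" using c D by (simp add: u_def)
  have xi: "xi_of ord u = xi_of ord D" unfolding u_def by (rule xi_scale[OF c(1)])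
  have od: "ord_disc_ideal ord u = ord_disc_ideal ord D" unfolding u_def by (rule odi_scale[OF c(1)])
  have sq: "sqa u \<longleftrightarrow> sqa D" unfolding u_def by (rule sqa_scale[OF c(1) D])
  have ou: "ord u = ord D mod 2" using c by (simp add: u_def)
  have 1: "xi_of ord D = 0 \<and> ord_disc_ideal ord D = 3" if "odd (ord D)"
  proof -
    have "ord u = 1" using ou that by presburger
    then show ?thesis using base_odd[OF u0] xi od by simp
  qed
  have 2: "xi_of ord D = 0 \<and> ord_disc_ideal ord D = 2" if a: "even (ord D)" "\<not> sqa D"
  proof -
    have o: "ord u = 0" using ou a by presburger
    have "\<not> (\<exists>s. vge ord 2 (u - s^2))" using a sq o by (simp add: sqa_def)
    then show ?thesis using base_ram[OF u0 o] xi od by simp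
  qed
  have 3: "xi_of ord D \<noteq> 0 \<and> ord_disc_ideal ord D = 0" if a: "even (ord D)" "sqa D"
  proof -
    have o: "ord u = 0" using ou a by presburger
    obtain s where "vge ord 2 (u - s^2)" using a sq o by (auto simp: sqa_def)
    then show ?thesis using base_unr[OF u0 o] xi od by simp
  qed
  show ?thesis using 1 2 3 by blast
qed

end

context Val begin

lemma sqa_unit1:
  assumes w: "w \<noteq> 0" "ord w = 0" and b: "vge ord 2 (w - b^2)" and D: "D \<noteq> 0" and s: "sqa D"
  shows "sqa (w * D)"
proof -
  obtain s where s: "vge ord (ord D + 2) (D - s^2)" using s by (auto simp: sqa_def)
  have "vge ord (ord D) (D - (D - s^2))" by (rule vge_diff[OF vge_self vge_mono[OF s]]) simp
  then have s2: "vge ord (ord D) (s^2)" by simp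
  have w0: "vge ord 0 w" using w by (simp add: vge_def)
  have "vge ord (ord D + 2) (w * (D - s^2) + s^2 * (w - b^2))"
    by (rule vge_add[OF vge_multl[OF w0 s] vge_mult[OF s2 b]])
  moreover have "w * (D - s^2) + s^2 * (w - b^2) = w * D - (b * s)^2" by (simp add: power2_eq_square algebra_simps)
  moreover have "ord (w * D) = ord D" using w D by (simp add: omult)
  ultimately show ?thesis unfolding sqa_def by metis
qed

lemma sqa_unit:
  assumes w: "w \<noteq> 0" "ord w = 0" and b: "vge ord 2 (w - b^2)" and D: "D \<noteq> 0"
  shows "sqa (w * D) \<longleftrightarrow> sqa D"
proof
  show "sqa D \<Longrightarrow> sqa (w * D)" by (rule sqa_unit1[OF w b D])
next
  assume s: "sqa (w * D)"
  have b0: "b^2 \<noteq> 0 \<and> ord (b^2) = 0"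
  proof (cases "w - b^2 = 0")
    case True then show ?thesis using w by simp
  next
    case False
    then have "ord (w - b^2) \<ge> 2" using b by (simp add: vge_def)
    then have o: "ord w < ord (- (w - b^2))" using w ouminus[of "w - b^2"] by simp
    have n: "- (w - b^2) \<noteq> 0" using False by simp
    have "w + - (w - b^2) \<noteq> 0 \<and> ord (w + - (w - b^2)) = ord w" by (rule ostrict[OF w(1) n o])
    moreover have "w + - (w - b^2) = b^2" by simp
    ultimately show ?thesis using w by simp
  qed
  have iw: "inverse w \<noteq> 0" "ord (inverse w) = 0" using w by (auto simp: oinv)
  have m: "vge ord 2 (- (w - b^2))" using b by (simp only: vge_uminus)
  have wb: "w * b^2 \<noteq> 0" using w b0 by simp
  have "ord (inverse (w * b^2)) = 0" using oinv[OF wb] omult[of w "b^2"] w b0 by simp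
  then have i: "vge ord 0 (inverse (w * b^2))" by (simp add: vge_def)
  have "vge ord (2 + 0) (- (w - b^2) * inverse (w * b^2))" by (rule vge_mult[OF m i])
  moreover have "- (w - b^2) * inverse (w * b^2) = inverse w - (inverse b)^2"
    using b0 w by (simp add: field_simps power2_eq_square)
  ultimately have ib: "vge ord 2 (inverse w - (inverse b)^2)" by simp
  have "sqa (inverse w * (w * D))" by (rule sqa_unit1[OF iw ib _ s]) (use w D in simp)
  moreover have "inverse w * (w * D) = D" using w by (simp add: mult.assoc[symmetric])
  ultimately show "sqa D" by simp
qed

lemma o4m: "ord (-4::'a) = 2" using o4 ouminus[of "4::'a"] by simp

lemma oDB: "det B \<noteq> 0 \<Longrightarrow> DB B \<noteq> 0 \<and> ord (DB B) = 2 * int (dim_row B div 2) + ord (det B)"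
  by (simp add: DB_def omult opow o4m)

lemma xi_cases: "xi_of ord D = 0 \<or> xi_of ord D = 1 \<or> xi_of ord D = -1"
  by (simp add: xi_of_def)

lemma Delta_even:
  assumes n: "even (dim_row B)" and d: "det B \<noteq> 0"
  shows "DeltaB ord B = ord (DB B) - (if odd (ord (DB B)) then 2 else if sqa (DB B) then 0 else 1)
    \<and> (xiB ord B = 0 \<longleftrightarrow> (odd (ord (DB B)) \<or> \<not> sqa (DB B)))"
proof -
  have D: "DB B \<noteq> 0" using oDB[OF d] by simp
  note c = corr_all[OF D]
  have x2: "xi_of ord (DB B) \<noteq> 0 \<Longrightarrow> (xi_of ord (DB B))^2 = 1" using xi_cases[of "DB B"] by auto
  show ?thesis using c x2 n unfolding DeltaB_def xiB_def by auto
qed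

end

lemma det2: assumes A: "(A :: 'a :: comm_ring_1 mat) \<in> carrier_mat 2 2"
  shows "det A = A $$ (0,0) * A $$ (1,1) - A $$ (0,1) * A $$ (1,0)"
proof -
  have "det A = (\<Sum>i<2. A $$ (i,0) * cofactor A i 0)" by (rule laplace_expansion_column[OF A]) auto
  also have "\<dots> = A $$ (0,0) * cofactor A 0 0 + A $$ (1,0) * cofactor A 1 0"
    by (simp add: numeral_2_eq_2)
  also have "cofactor A 0 0 = A $$ (1,1)" unfolding cofactor_def
    using A by (subst det_single) (auto simp: mat_delete_def)
  also have "cofactor A 1 0 = - A $$ (0,1)" unfolding cofactor_def
    using A by (subst det_single) (auto simp: mat_delete_def)
  finally show ?thesis by (simp add: algebra_simps)
qed

lemma form_snoc:
  assumes "form_of xs \<in> carrier_mat n1 n1" "C \<in> carrier_mat n2 n2"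
  shows "form_of (xs @ [(k,C)]) = four_block_mat (form_of xs) (0\<^sub>m n1 n2) (0\<^sub>m n2 n1) ((2::'a::field) ^ k \<cdot>\<^sub>m C)"
  using assms by (simp add: form_of_def diag_block_mat_last Let_def)

lemma form_snoc_det:
  assumes "form_of xs \<in> carrier_mat n1 n1" "C \<in> carrier_mat n2 n2"
  shows "form_of (xs @ [(k,C)]) \<in> carrier_mat (n1 + n2) (n1 + n2)
    \<and> det (form_of (xs @ [(k,C)])) = det (form_of xs) * ((2::'a::field) ^ k) ^ n2 * det C"
proof -
  have c: "(2::'a) ^ k \<cdot>\<^sub>m C \<in> carrier_mat n2 n2" using assms by simp
  show ?thesis unfolding form_snoc[OF assms]
    apply (intro conjI)
     apply (rule four_block_carrier_mat[OF assms(1) c])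
    apply (subst det_four_block_mat_upper_right_zero[OF assms(1) refl _ c])
    using assms by auto
qed

lemma form_ok:
  "(\<forall>p\<in>set xs. \<exists>m. snd p \<in> carrier_mat m m \<and> det (snd p) \<noteq> 0) \<Longrightarrow>
   \<exists>n. form_of xs \<in> carrier_mat n n \<and> det (form_of (xs :: (nat \<times> 'a::field_char_0 mat) list)) \<noteq> 0"
proof (induct xs rule: rev_induct)
  case Nil
  then show ?case by (auto simp: form_of_def intro!: exI[of _ 0])
next
  case (snoc p xs)
  obtain n where n: "form_of xs \<in> carrier_mat n n" "det (form_of xs) \<noteq> 0" using snoc by auto
  obtain k C where p: "p = (k, C)" by (cases p)
  obtain m where m: "C \<in> carrier_mat m m" "det C \<noteq> 0" using snoc p by auto
  show ?case using form_snoc_det[OF n(1) m(1), of k] n m p by auto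
qed

context Val begin

lemma block_ok:
  assumes "unimod_diag ord C \<or> half_even_unimod ord C"
  shows "\<exists>m. C \<in> carrier_mat m m \<and> det C \<noteq> 0"
  using assms
proof
  assume u: "unimod_diag ord C"
  then obtain m where m: "C \<in> carrier_mat m m" and dg: "diagonal_mat C"
    and un: "\<forall>i<dim_row C. is_unit ord (C $$ (i,i))" unfolding unimod_diag_def by auto
  have ut: "upper_triangular C" using dg m unfolding diagonal_mat_def upper_triangular_def by auto
  have "det C = prod_list (diag_mat C)" by (rule det_upper_triangular[OF ut m])
  moreover have "0 \<notin> set (diag_mat C)" using un by (auto simp: diag_mat_def is_unit_def)
  ultimately show ?thesis using m by (auto simp: prod_list_zero_iff)
next
  assume h: "half_even_unimod ord C"
  then have C: "C \<in> carrier_mat 2 2" and d: "is_unit ord (det ((2::'a) \<cdot>\<^sub>m C))"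
    unfolding half_even_unimod_def Let_def by auto
  then show ?thesis using C by (auto simp: is_unit_def)
qed

end

theorem lemma2p2:
  fixes ord :: "'a::field_char_0 \<Rightarrow> int"
    and bs :: "(nat \<times> 'a mat) list"
  assumes F: "unram_ext_Q2 ord"
    and r: "bs \<noteq> []"
    and po: "pre_optimal ord bs"
  defines "B \<equiv> form_of bs"
    and "B1 \<equiv> form_of (butlast bs)"
    and "kr \<equiv> int (fst (last bs))"
    and "Cr \<equiv> snd (last bs)"
  shows
    "(dim_row Cr = 1 \<longrightarrow>
        (even (dim_row B1) \<longrightarrow>
            (odd (ord (det B1)) \<longrightarrow> DeltaB ord B - DeltaB ord B1 = kr + 2)
          \<and> (even (ord (det B1)) \<and> xiB ord B1 = 0 \<longrightarrow> DeltaB ord B - DeltaB ord B1 = kr + 1)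
          \<and> (xiB ord B1 \<noteq> 0 \<longrightarrow> DeltaB ord B - DeltaB ord B1 = kr))
      \<and> (odd (dim_row B1) \<longrightarrow>
            (odd (ord (det B)) \<longrightarrow> DeltaB ord B - DeltaB ord B1 = kr)
          \<and> (even (ord (det B)) \<and> xiB ord B = 0 \<longrightarrow> DeltaB ord B - DeltaB ord B1 = kr + 1)
          \<and> (xiB ord B \<noteq> 0 \<longrightarrow> DeltaB ord B - DeltaB ord B1 = kr + 2)))
   \<and> (dim_row Cr = 2 \<and> unimod_diag ord Cr \<longrightarrow> DeltaB ord B = DeltaB ord B1 + 2 * kr + 2)
   \<and> (half_even_unimod ord Cr \<longrightarrow> DeltaB ord B = DeltaB ord B1 + 2 * kr)"
proof -
  interpret Val ord using F by (rule Val.intro)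
  define k where "k = fst (last bs)"
  define bs1 where "bs1 = butlast bs"
  have bs: "bs = bs1 @ [(k, Cr)]" using r by (simp add: bs1_def k_def Cr_def)
  have kr: "kr = int k" by (simp add: kr_def k_def)
  have B1f: "B1 = form_of bs1" by (simp add: B1_def bs1_def)
  have Bf: "B = form_of (bs1 @ [(k,Cr)])" unfolding B_def using bs by simp
  have po1: "\<forall>i\<in>{1..length bs}. unimod_diag ord (CC bs i) \<or> half_even_unimod ord (CC bs i)"
    using po unfolding pre_optimal_def by (rule conjunct1)
  have blk: "unimod_diag ord (snd p) \<or> half_even_unimod ord (snd p)" if p: "p \<in> set bs" for p
  proof -
    obtain i where i: "i < length bs" "bs ! i = p" using p by (auto simp: in_set_conv_nth)
    have "Suc i \<in> {1..length bs}" using i by simp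
    then have "unimod_diag ord (CC bs (Suc i)) \<or> half_even_unimod ord (CC bs (Suc i))"
      using po1 by blast
    then show ?thesis using i by (simp add: CC_def)
  qed
  have okbs1: "\<forall>p\<in>set bs1. \<exists>m. snd p \<in> carrier_mat m m \<and> det (snd p) \<noteq> 0"
  proof
    fix p assume "p \<in> set bs1"
    then have "p \<in> set bs" using bs by simp
    then show "\<exists>m. snd p \<in> carrier_mat m m \<and> det (snd p) \<noteq> 0" using blk block_ok by blast
  qed
  obtain n1 where n1: "B1 \<in> carrier_mat n1 n1" "det B1 \<noteq> 0" using form_ok[OF okbs1] B1f by auto
  have Cblk: "unimod_diag ord Cr \<or> half_even_unimod ord Cr" using blk[of "(k,Cr)"] bs by simp
  obtain n2 where n2: "Cr \<in> carrier_mat n2 n2" "det Cr \<noteq> 0" using block_ok[OF Cblk] by auto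
  have BB: "B \<in> carrier_mat (n1+n2) (n1+n2) \<and> det B = det B1 * ((2::'a)^k)^n2 * det Cr"
    using form_snoc_det[OF n1(1)[unfolded B1f] n2(1), of k] Bf B1f by simp
  have dB1: "dim_row B1 = n1" using n1 by simp
  have dB: "dim_row B = n1 + n2" using carrier_matD(1)[OF conjunct1[OF BB]] .
  have dC: "dim_row Cr = n2" using n2 by simp
  have detB0: "det B \<noteq> 0" using BB n1 n2 by simp
  have odB: "ord (det B) = ord (det B1) + int k * int n2 + ord (det Cr)"
    using BB n1 n2 by (simp add: omult opow o2)
  have oDB1: "ord (DB B1) = 2 * int (n1 div 2) + ord (det B1)" using oDB[OF n1(2)] dB1 by simp
  have oDB2: "ord (DB B) = 2 * int ((n1 + n2) div 2) + ord (det B)" using oDB[OF detB0] dB by simp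
  have DB10: "DB B1 \<noteq> 0" using oDB[OF n1(2)] by simp
  define a where "a = ord (det B1)"
  define q where "q = int (n1 div 2)"
  have P1: "dim_row Cr = 1 \<longrightarrow>
        (even (dim_row B1) \<longrightarrow>
            (odd (ord (det B1)) \<longrightarrow> DeltaB ord B - DeltaB ord B1 = kr + 2)
          \<and> (even (ord (det B1)) \<and> xiB ord B1 = 0 \<longrightarrow> DeltaB ord B - DeltaB ord B1 = kr + 1)
          \<and> (xiB ord B1 \<noteq> 0 \<longrightarrow> DeltaB ord B - DeltaB ord B1 = kr))
      \<and> (odd (dim_row B1) \<longrightarrow>
            (odd (ord (det B)) \<longrightarrow> DeltaB ord B - DeltaB ord B1 = kr)
          \<and> (even (ord (det B)) \<and> xiB ord B = 0 \<longrightarrow> DeltaB ord B - DeltaB ord B1 = kr + 1)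
          \<and> (xiB ord B \<noteq> 0 \<longrightarrow> DeltaB ord B - DeltaB ord B1 = kr + 2))"
  proof
    assume c1: "dim_row Cr = 1"
    then have n21: "n2 = 1" using dC by simp
    have ud: "unimod_diag ord Cr" using Cblk c1 unfolding half_even_unimod_def by auto
    have dc: "det Cr = Cr $$ (0,0)" using n2 n21 by (simp add: det_single)
    have oc: "ord (det Cr) = 0" using ud c1 dc unfolding unimod_diag_def is_unit_def by auto
    have odB': "ord (det B) = a + int k" using odB oc n21 by (simp add: a_def)
    have e1: "ord (DB B1) = 2 * q + a" using oDB1 by (simp add: q_def a_def)
    show "(even (dim_row B1) \<longrightarrow>
            (odd (ord (det B1)) \<longrightarrow> DeltaB ord B - DeltaB ord B1 = kr + 2)
          \<and> (even (ord (det B1)) \<and> xiB ord B1 = 0 \<longrightarrow> DeltaB ord B - DeltaB ord B1 = kr + 1)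
          \<and> (xiB ord B1 \<noteq> 0 \<longrightarrow> DeltaB ord B - DeltaB ord B1 = kr))
      \<and> (odd (dim_row B1) \<longrightarrow>
            (odd (ord (det B)) \<longrightarrow> DeltaB ord B - DeltaB ord B1 = kr)
          \<and> (even (ord (det B)) \<and> xiB ord B = 0 \<longrightarrow> DeltaB ord B - DeltaB ord B1 = kr + 1)
          \<and> (xiB ord B \<noteq> 0 \<longrightarrow> DeltaB ord B - DeltaB ord B1 = kr + 2))"
    proof (cases "even n1")
      case ev: True
      have h: "(n1 + 1) div 2 = n1 div 2" using ev by presburger
      have DB: "DeltaB ord B = 2 * q + a + int k" using ev dB n21 oDB2 odB' h
        by (simp add: DeltaB_def q_def)
      note D1 = Delta_even[OF _ n1(2)]
      have D1': "DeltaB ord B1 = 2 * q + a - (if odd a then 2 else if sqa (DB B1) then 0 else 1)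
         \<and> (xiB ord B1 = 0 \<longleftrightarrow> (odd a \<or> \<not> sqa (DB B1)))"
        using D1 ev dB1 e1 by simp
      show ?thesis using ev dB1 D1' DB kr by (auto simp: a_def)
    next
      case od: False
      have h: "(n1 + 1) div 2 = n1 div 2 + 1" using od by presburger
      have D1: "DeltaB ord B1 = 2 * q + a" using od dB1 e1 by (simp add: DeltaB_def)
      have eB: "ord (DB B) = 2 * q + 2 + a + int k" using oDB2 n21 odB' h by (simp add: q_def)
      have DBe: "DeltaB ord B = ord (DB B) - (if odd (ord (DB B)) then 2 else if sqa (DB B) then 0 else 1)
         \<and> (xiB ord B = 0 \<longleftrightarrow> (odd (ord (DB B)) \<or> \<not> sqa (DB B)))"
        using Delta_even[OF _ detB0] od dB n21 by simp
      have par: "odd (ord (DB B)) \<longleftrightarrow> odd (ord (det B))" using eB odB' by presburger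
      show ?thesis using od dB1 D1 DBe eB kr par odB' by auto
    qed
  qed
  define L where "L = length bs"
  have L1: "L \<ge> 1" using r by (simp add: L_def Suc_le_eq)
  have CCL: "CC bs L = Cr" using r by (simp add: CC_def L_def Cr_def last_conv_nth)
  have BpL: "Bpre bs L = B" by (simp add: Bpre_def L_def B_def)
  have BpL1: "Bpre bs (L - 1) = B1" by (simp add: Bpre_def L_def B1_def butlast_conv_take)
  have e1: "ord (DB B1) = 2 * q + a" using oDB1 by (simp add: q_def a_def)
  have P2: "dim_row Cr = 2 \<and> unimod_diag ord Cr \<longrightarrow> DeltaB ord B = DeltaB ord B1 + 2 * kr + 2"
  proof
    assume c2: "dim_row Cr = 2 \<and> unimod_diag ord Cr"
    then have n22: "n2 = 2" using dC by simp
    have C2: "Cr \<in> carrier_mat 2 2" using n2 n22 by simp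
    have dg: "diagonal_mat Cr" and un: "\<forall>i<dim_row Cr. is_unit ord (Cr $$ (i,i))"
      using c2 unfolding unimod_diag_def by auto
    have "Cr $$ (0,1) = 0" using dg C2 unfolding diagonal_mat_def by auto
    then have dc: "det Cr = Cr $$ (0,0) * Cr $$ (1,1)" using det2[OF C2] by simp
    have "is_unit ord (Cr $$ (0,0))" "is_unit ord (Cr $$ (1,1))" using un c2 by auto
    then have oc: "ord (det Cr) = 0" using dc by (simp add: is_unit_def omult)
    have odB': "ord (det B) = a + 2 * int k" using odB oc n22 by (simp add: a_def)
    show "DeltaB ord B = DeltaB ord B1 + 2 * kr + 2"
    proof (cases "even n1")
      case ev: True
      have po3: "\<forall>i\<in>{1..length bs}. isD ord bs i \<and> dim_row (CC bs i) = 2 \<longrightarrow>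
        i \<ge> 2 \<and>
        ((even (dim_row (Bpre bs i)) \<and> xiB ord (Bpre bs (i-1)) = 0 \<and> xiB ord (Bpre bs i) = 0)
       \<or> (odd (dim_row (Bpre bs (i-1))) \<and> even (ord (det (Bpre bs (i-1))) + int (kk bs i))))"
        using po unfolding pre_optimal_def by (elim conjE) assumption
      have "L \<in> {1..length bs}" using L1 by (simp add: L_def)
      moreover have "isD ord bs L \<and> dim_row (CC bs L) = 2" using CCL c2 by (simp add: isD_def)
      ultimately have "(even (dim_row B) \<and> xiB ord B1 = 0 \<and> xiB ord B = 0)
       \<or> (odd (dim_row B1) \<and> even (ord (det B1) + int (kk bs L)))"
        using po3 BpL BpL1 by (metis (no_types, lifting))
      then have xi0: "xiB ord B1 = 0" "xiB ord B = 0" using ev dB1 by auto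
      have h: "(n1 + 2) div 2 = n1 div 2 + 1" using ev by presburger
      have eB: "ord (DB B) = 2 * q + 2 + a + 2 * int k" using oDB2 n22 odB' h by (simp add: q_def)
      have DBe: "DeltaB ord B = ord (DB B) - (if odd (ord (DB B)) then 2 else if sqa (DB B) then 0 else 1)
         \<and> (xiB ord B = 0 \<longleftrightarrow> (odd (ord (DB B)) \<or> \<not> sqa (DB B)))"
        using Delta_even[OF _ detB0] ev dB n22 by simp
      have D1: "DeltaB ord B1 = ord (DB B1) - (if odd (ord (DB B1)) then 2 else if sqa (DB B1) then 0 else 1)
         \<and> (xiB ord B1 = 0 \<longleftrightarrow> (odd (ord (DB B1)) \<or> \<not> sqa (DB B1)))"
        using Delta_even[OF _ n1(2)] ev dB1 by simp
      show ?thesis using DBe D1 xi0 eB e1 kr by auto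
    next
      case od: False
      have h: "(n1 + 2) div 2 = n1 div 2 + 1" using od by presburger
      have D1: "DeltaB ord B1 = 2 * q + a" using od dB1 e1 by (simp add: DeltaB_def)
      have eB: "ord (DB B) = 2 * q + 2 + a + 2 * int k" using oDB2 n22 odB' h by (simp add: q_def)
      have "DeltaB ord B = ord (DB B)" using od dB n22 by (simp add: DeltaB_def)
      then show ?thesis using D1 eB kr by simp
    qed
  qed
  have P3: "half_even_unimod ord Cr \<longrightarrow> DeltaB ord B = DeltaB ord B1 + 2 * kr"
  proof
    assume he: "half_even_unimod ord Cr"
    define Mm where "Mm = (2::'a) \<cdot>\<^sub>m Cr"
    have C2: "Cr \<in> carrier_mat 2 2" and sym: "Mm $$ (0,1) = Mm $$ (1,0)"
      and m00: "in_2o ord (Mm $$ (0,0))" and m11: "in_2o ord (Mm $$ (1,1))"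
      and uM: "is_unit ord (det Mm)"
      using he unfolding half_even_unimod_def Let_def Mm_def by auto
    have n22: "n2 = 2" using C2 n2 by auto
    have M2: "Mm \<in> carrier_mat 2 2" using C2 by (simp add: Mm_def)
    have dM: "det Mm = 4 * det Cr" using C2 by (simp add: Mm_def)
    have dM0: "det Mm \<noteq> 0" "ord (det Mm) = 0" using uM by (auto simp: is_unit_def)
    have dCr: "det Cr = det Mm * inverse 4" using dM by simp
    have oc: "ord (det Cr) = -2" unfolding dCr using dM0 omult[of "det Mm" "inverse 4"] oinv[of "4::'a"] o4
      by simp
    have odB': "ord (det B) = a + 2 * int k - 2" using odB oc n22 by (simp add: a_def)
    show "DeltaB ord B = DeltaB ord B1 + 2 * kr"
    proof (cases "even n1")
      case ev: True
      define w where "w = - det Mm"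
      have w: "w \<noteq> 0" "ord w = 0" using dM0 by (auto simp: w_def ouminus)
      define b where "b = Mm $$ (0,1)"
      have "det Mm = Mm $$ (0,0) * Mm $$ (1,1) - Mm $$ (0,1) * Mm $$ (1,0)" by (rule det2[OF M2])
      then have wb: "w - b^2 = - (Mm $$ (0,0) * Mm $$ (1,1))" using sym by (simp add: w_def b_def power2_eq_square)
      have "vge ord (1 + 1) (Mm $$ (0,0) * Mm $$ (1,1))"
        by (rule vge_mult) (use m00 m11 in \<open>simp_all add: in_2o_vge\<close>)
      then have wb2: "vge ord 2 (w - b^2)" unfolding wb by (simp add: vge_uminus)
      have h: "(n1 + 2) div 2 = n1 div 2 + 1" using ev by presburger
      have DBeq: "DB B = ((2::'a)^k)^2 * (w * DB B1)"
      proof -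
        have "DB B = (-4) ^ (n1 div 2 + 1) * det B" using dB n22 h by (simp add: DB_def)
        also have "\<dots> = ((2::'a)^k)^2 * (w * DB B1)"
          using BB n22 dB1 by (simp add: DB_def w_def dM power_add algebra_simps)
        finally show ?thesis .
      qed
      have c0: "((2::'a)^k) \<noteq> 0" by simp
      have wD: "w * DB B1 \<noteq> 0" using w DB10 by simp
      have sq: "sqa (DB B) \<longleftrightarrow> sqa (DB B1)"
        unfolding DBeq using sqa_scale[OF c0 wD] sqa_unit[OF w wb2 DB10] by simp
      have eB: "ord (DB B) = ord (DB B1) + 2 * int k"
        unfolding DBeq using w DB10 c0 by (simp add: omult opow o2)
      have DBe: "DeltaB ord B = ord (DB B) - (if odd (ord (DB B)) then 2 else if sqa (DB B) then 0 else 1)"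
        using Delta_even[OF _ detB0] ev dB n22 by simp
      have D1: "DeltaB ord B1 = ord (DB B1) - (if odd (ord (DB B1)) then 2 else if sqa (DB B1) then 0 else 1)"
        using Delta_even[OF _ n1(2)] ev dB1 by simp
      show ?thesis using DBe D1 eB sq kr by auto
    next
      case od: False
      have h: "(n1 + 2) div 2 = n1 div 2 + 1" using od by presburger
      have D1: "DeltaB ord B1 = 2 * q + a" using od dB1 e1 by (simp add: DeltaB_def)
      have eB: "ord (DB B) = 2 * q + a + 2 * int k" using oDB2 n22 odB' h by (simp add: q_def)
      have "DeltaB ord B = ord (DB B)" using od dB n22 by (simp add: DeltaB_def)
      then show ?thesis using D1 eB kr by simp
    qed
  qed
  show ?thesis using P1 P2 P3 by blast
qed

end
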